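(* Let $G$ be a finite simple graph with edge weight function $w$ and vertex weight function $w_1$. Then (a) the multiplicity of any root of $\eta_{(w,w_1)}(G,x)$ is at most the number of paths in any family of vertex-disjoint paths (single vertices allowed) covering all vertices of $G$; (b) the number of distinct roots of $\eta_{(w,w_1)}(G,x)$ is at least the number of vertices of a longest path in $G$.
   Context: An edge weight function $w$ assigns a nonzero complex number to each edge; a vertex weight function $w_1$ assigns a real number (possibly $0$) to each vertex; induced subgraphs carry restricted weights. For $A\subseteq E(G)$, $w(A)=\prod_{e\in A}w(e)$. $\mu_w(G,x)=\sum_{M}(-1)^{|M|}|w(M)|^2x^{n-2|M|}$ over all matchings $M$ (including empty), $n=|V(G)|$. $\eta_{(w,w_1)}(G,x)=\sum_{S\subseteq V(G)}(-1)^{|V(G)\setminus S|}\big(\prod_{y\in V(G)\setminus S}w_1(y)\big)\mu_w(G[S],x)$ with $G[S]$ the induced subgraph and $\mu_w$ of the empty graph equal to $1$. *)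

theory Defs
  imports Complex_Main "HOL-Computational_Algebra.Polynomial"
begin

definition simple_graph :: "'a set \<Rightarrow> 'a set set \<Rightarrow> bool" where
  "simple_graph V E \<longleftrightarrow> finite V \<and> (\<forall>e\<in>E. e \<subseteq> V \<and> card e = 2)"

definition induced_edges :: "'a set set \<Rightarrow> 'a set \<Rightarrow> 'a set set" where
  "induced_edges E S = {e\<in>E. e \<subseteq> S}"

definition matchings :: "'a set set \<Rightarrow> 'a set set set" where
  "matchings E = {M. M \<subseteq> E \<and> (\<forall>e\<in>M. \<forall>f\<in>M. e \<noteq> f \<longrightarrow> e \<inter> f = {})}"

definition mu_w :: "'a set set \<Rightarrow> ('a set \<Rightarrow> complex) \<Rightarrow> 'a set \<Rightarrow> real poly" where
  "mu_w E w S = (\<Sum>M\<in>matchings (induced_edges E S).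
      monom ((-1) ^ card M * (cmod (\<Prod>e\<in>M. w e))\<^sup>2) (card S - 2 * card M))"

definition eta_w :: "'a set \<Rightarrow> 'a set set \<Rightarrow> ('a set \<Rightarrow> complex) \<Rightarrow> ('a \<Rightarrow> real) \<Rightarrow> real poly" where
  "eta_w V E w w1 = (\<Sum>S\<in>Pow V.
      smult ((-1) ^ card (V - S) * (\<Prod>y\<in>V - S. w1 y)) (mu_w E w S))"

definition is_path :: "'a set \<Rightarrow> 'a set set \<Rightarrow> 'a list \<Rightarrow> bool" where
  "is_path V E p \<longleftrightarrow> p \<noteq> [] \<and> distinct p \<and> set p \<subseteq> V \<and>
     (\<forall>i. Suc i < length p \<longrightarrow> {p ! i, p ! Suc i} \<in> E)"

definition path_cover :: "'a set \<Rightarrow> 'a set set \<Rightarrow> 'a list set \<Rightarrow> bool" where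
  "path_cover V E P \<longleftrightarrow> finite P \<and> (\<forall>p\<in>P. is_path V E p) \<and>
     (\<forall>p\<in>P. \<forall>q\<in>P. p \<noteq> q \<longrightarrow> set p \<inter> set q = {}) \<and>
     (\<Union>p\<in>P. set p) = V"

end

theory Submission
  imports Defs "HOL-Computational_Algebra.Fundamental_Theorem_Algebra"
begin

lemma smult_sum_right: "smult c (\<Sum>i\<in>A. f i) = (\<Sum>i\<in>A. smult c (f i))"
  by (induction A rule: infinite_finite_induct) (auto simp: smult_add_right)

lemma matchings_finite: "finite S \<Longrightarrow> finite (matchings (induced_edges E S))"
proof -
  assume "finite S"
  have "induced_edges E S \<subseteq> Pow S" by (auto simp: induced_edges_def)
  hence "finite (induced_edges E S)" using \<open>finite S\<close> by (meson finite_Pow_iff finite_subset)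
  moreover have "matchings (induced_edges E S) \<subseteq> Pow (induced_edges E S)" by (auto simp: matchings_def)
  ultimately show ?thesis by (meson finite_Pow_iff finite_subset)
qed

lemma matching_mem_finite: "finite S \<Longrightarrow> M \<in> matchings (induced_edges E S) \<Longrightarrow> finite M"
proof -
  assume "finite S" "M \<in> matchings (induced_edges E S)"
  have "induced_edges E S \<subseteq> Pow S" by (auto simp: induced_edges_def)
  hence "finite (induced_edges E S)" using \<open>finite S\<close> by (meson finite_Pow_iff finite_subset)
  thus ?thesis using \<open>M \<in> _\<close> by (auto simp: matchings_def intro: finite_subset)
qed

lemma matching_card:
  assumes E2: "\<forall>e\<in>E. card e = 2" and fin: "finite T" and M: "M \<in> matchings (induced_edges E T)"
  shows "2 * card M \<le> card T"
proof -
  have fM: "finite M" using matching_mem_finite[OF fin M] .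
  have sub: "\<Union>M \<subseteq> T" using M by (auto simp: matchings_def induced_edges_def)
  have "card (\<Union>M) = sum card M"
    apply (rule card_Union_disjoint)
    using M apply (auto simp: matchings_def pairwise_def disjnt_def)[1]
    using M fin by (auto simp: matchings_def induced_edges_def intro: finite_subset)
  also have "\<dots> = sum (\<lambda>_. 2) M" using M E2 by (intro sum.cong) (auto simp: matchings_def induced_edges_def)
  also have "\<dots> = 2 * card M" by simp
  finally show ?thesis using card_mono[OF fin sub] by simp
qed

lemma mu_rec:
  assumes E2: "\<forall>e\<in>E. card e = 2" and fin: "finite S" and u: "u \<in> S"
  shows "mu_w E w S = pCons 0 (mu_w E w (S - {u})) -
     (\<Sum>v\<in>{v\<in>S-{u}. {u,v}\<in>E}. smult ((cmod (w {u,v}))\<^sup>2) (mu_w E w (S - {u} - {v})))"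
proof -
  define f where "f T M = (monom ((-1) ^ card M * (cmod (\<Prod>e\<in>M. w e))\<^sup>2) (card T - 2 * card M) :: real poly)"
    for T :: "'a set" and M
  have mu_f: "mu_w E w T = (\<Sum>M\<in>matchings (induced_edges E T). f T M)" for T by (simp add: mu_w_def f_def)
  define MS where "MS = matchings (induced_edges E S)"
  define N where "N = {v\<in>S-{u}. {u,v}\<in>E}"
  define A where "A = matchings (induced_edges E (S - {u}))"
  define B where "B v = insert {u,v} ` matchings (induced_edges E (S-{u}-{v}))" for v
  have split: "MS = A \<union> (\<Union>v\<in>N. B v)"
  proof
    show "MS \<subseteq> A \<union> (\<Union>v\<in>N. B v)"
    proof
      fix M assume M: "M \<in> MS"
      show "M \<in> A \<union> (\<Union>v\<in>N. B v)"
      proof (cases "\<exists>e\<in>M. u \<in> e")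
        case False
        then have "M \<in> A" using M by (auto simp: A_def MS_def matchings_def induced_edges_def)
        thus ?thesis by simp
      next
        case True
        then obtain e where e: "e \<in> M" "u \<in> e" by blast
        have eE: "e \<in> E" "e \<subseteq> S" using e M by (auto simp: MS_def matchings_def induced_edges_def)
        then have "card e = 2" using E2 by auto
        then obtain x y where xy: "e = {x,y}" "x \<noteq> y" by (auto simp: card_2_iff)
        obtain v where v: "e = {u,v}" "v \<noteq> u"
          using xy e(2) by (metis insert_commute insertE singletonD)
        have vN: "v \<in> N" using v eE by (auto simp: N_def)
        have Mm: "M \<subseteq> E" "\<forall>f\<in>M. f \<subseteq> S" "\<forall>f\<in>M. \<forall>g\<in>M. f \<noteq> g \<longrightarrow> f \<inter> g = {}"
          using M by (auto simp: MS_def matchings_def induced_edges_def)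
        have "f \<subseteq> S-{u}-{v}" if "f \<in> M - {e}" for f
        proof -
          have "f \<inter> e = {}" using Mm(3) that e(1) by auto
          thus ?thesis using Mm(2) that v(1) by auto
        qed
        hence "M - {e} \<in> matchings (induced_edges E (S-{u}-{v}))"
          using Mm by (auto simp: matchings_def induced_edges_def)
        moreover have "M = insert {u,v} (M - {e})" using e v by auto
        ultimately have "M \<in> B v" unfolding B_def by blast
        thus ?thesis using vN by blast
      qed
    qed
  next
    show "A \<union> (\<Union>v\<in>N. B v) \<subseteq> MS"
    proof
      fix M assume "M \<in> A \<union> (\<Union>v\<in>N. B v)"
      then consider "M \<in> A" | v where "v \<in> N" "M \<in> B v" by blast
      then show "M \<in> MS"
      proof cases
        case 1 then show ?thesis by (auto simp: A_def MS_def matchings_def induced_edges_def)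
      next
        case 2
        then obtain M' where M': "M = insert {u,v} M'" "M' \<in> matchings (induced_edges E (S-{u}-{v}))"
          by (auto simp: B_def)
        show ?thesis using 2(1) M' u by (auto simp: N_def MS_def matchings_def induced_edges_def)
      qed
    qed
  qed
  have disj1: "A \<inter> (\<Union>v\<in>N. B v) = {}"
    by (auto simp: A_def B_def matchings_def induced_edges_def)
  have disj2: "\<forall>v\<in>N. \<forall>v'\<in>N. v \<noteq> v' \<longrightarrow> B v \<inter> B v' = {}"
  proof (intro ballI impI)
    fix v v' assume "v \<in> N" "v' \<in> N" "v \<noteq> v'"
    show "B v \<inter> B v' = {}"
    proof (rule ccontr)
      assume "B v \<inter> B v' \<noteq> {}"
      then obtain M1 M2 where "insert {u,v} M1 = insert {u,v'} M2"
        "M2 \<in> matchings (induced_edges E (S-{u}-{v'}))" by (auto simp: B_def)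
      moreover have "{u,v} \<noteq> {u,v'}" using \<open>v \<noteq> v'\<close> by (auto simp: doubleton_eq_iff)
      ultimately have "{u,v} \<in> M2" by (metis insertE insertI1)
      thus False using \<open>M2 \<in> _\<close> by (auto simp: matchings_def induced_edges_def)
    qed
  qed
  have finN: "finite N" using fin by (auto simp: N_def)
  have finA: "finite A" using fin by (simp add: A_def matchings_finite)
  have finB: "finite (B v)" for v using fin by (simp add: B_def matchings_finite)
  have "mu_w E w S = (\<Sum>M\<in>A. f S M) + (\<Sum>M\<in>(\<Union>v\<in>N. B v). f S M)"
    unfolding mu_f MS_def[symmetric] split
    by (rule sum.union_disjoint) (use finA finB finN disj1 in auto)
  also have "(\<Sum>M\<in>(\<Union>v\<in>N. B v). f S M) = (\<Sum>v\<in>N. \<Sum>M\<in>B v. f S M)"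
    by (rule sum.UNION_disjoint) (use finN finB disj2 in auto)
  also have "(\<Sum>M\<in>A. f S M) = pCons 0 (mu_w E w (S - {u}))"
  proof -
    have "(\<Sum>M\<in>A. f S M) = (\<Sum>M\<in>A. pCons 0 (f (S - {u}) M))"
    proof (rule sum.cong)
      fix M assume MA: "M \<in> A"
      have "2 * card M \<le> card (S - {u})" using matching_card[OF E2 _ MA[unfolded A_def]] fin by auto
      moreover have "card S = Suc (card (S - {u}))" by (metis card_Suc_Diff1 fin u)
      ultimately have "card S - 2 * card M = Suc (card (S - {u}) - 2 * card M)" by simp
      thus "f S M = pCons 0 (f (S - {u}) M)" by (simp add: f_def monom_Suc)
    qed simp
    also have "\<dots> = pCons 0 (\<Sum>M\<in>A. f (S - {u}) M)"
      by (induction A rule: infinite_finite_induct) auto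
    finally show ?thesis by (simp add: mu_f A_def)
  qed
  also have "(\<Sum>v\<in>N. \<Sum>M\<in>B v. f S M) =
     (\<Sum>v\<in>N. - smult ((cmod (w {u,v}))\<^sup>2) (mu_w E w (S - {u} - {v})))"
  proof (rule sum.cong[OF refl])
    fix v assume vN: "v \<in> N"
    define MV where "MV = matchings (induced_edges E (S-{u}-{v}))"
    have inj: "inj_on (insert {u,v}) MV"
    proof (rule inj_onI)
      fix X Y assume "X \<in> MV" "Y \<in> MV" "insert {u, v} X = insert {u, v} Y"
      moreover have "{u,v} \<notin> X" "{u,v} \<notin> Y" using \<open>X \<in> MV\<close> \<open>Y \<in> MV\<close>
        by (auto simp: MV_def matchings_def induced_edges_def)
      ultimately show "X = Y" by (metis insert_ident)
    qed
    have "(\<Sum>M\<in>B v. f S M) = (\<Sum>M'\<in>MV. f S (insert {u,v} M'))"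
      unfolding B_def MV_def[symmetric] by (rule sum.reindex[OF inj, unfolded comp_def])
    also have "\<dots> = (\<Sum>M'\<in>MV. - smult ((cmod (w {u,v}))\<^sup>2) (f (S - {u} - {v}) M'))"
    proof (rule sum.cong[OF refl])
      fix M' assume M': "M' \<in> MV"
      have fM': "finite M'" using matching_mem_finite[of "S-{u}-{v}" M' E] fin M' by (auto simp: MV_def)
      have nin: "{u,v} \<notin> M'" using M' by (auto simp: MV_def matchings_def induced_edges_def)
      have c2: "2 * card M' \<le> card (S - {u} - {v})" using matching_card[OF E2 _ M'[unfolded MV_def]] fin by auto
      have vS: "v \<in> S" "v \<noteq> u" using vN by (auto simp: N_def)
      have "card S = Suc (Suc (card (S - {u} - {v})))"
      proof -
        have "v \<in> S - {u}" using vS by auto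
        hence "Suc (card (S - {u} - {v})) = card (S - {u})" using fin by (metis card_Suc_Diff1 finite_Diff)
        moreover have "Suc (card (S - {u})) = card S" using fin u by (metis card_Suc_Diff1)
        ultimately show ?thesis by simp
      qed
      hence deg: "card S - 2 * card (insert {u,v} M') = card (S - {u} - {v}) - 2 * card M'"
        using fM' nin c2 by simp
      show "f S (insert {u,v} M') = - smult ((cmod (w {u,v}))\<^sup>2) (f (S - {u} - {v}) M')"
        unfolding f_def deg using fM' nin
        by (simp add: smult_monom norm_mult power_mult_distrib minus_monom)
    qed
    also have "\<dots> = - smult ((cmod (w {u,v}))\<^sup>2) (mu_w E w (S - {u} - {v}))"
      by (simp add: mu_f MV_def sum_negf smult_sum_right)
    finally show "(\<Sum>M\<in>B v. f S M) = - smult ((cmod (w {u,v}))\<^sup>2) (mu_w E w (S - {u} - {v}))" .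
  qed
  finally show ?thesis by (simp add: N_def sum_negf)
qed

lemma pCons0_sum: "pCons 0 (\<Sum>i\<in>A. f i) = (\<Sum>i\<in>A. pCons 0 (f i))"
  by (induction A rule: infinite_finite_induct) (auto, metis add_pCons add.right_neutral)

definition sgnw :: "('a \<Rightarrow> real) \<Rightarrow> 'a set \<Rightarrow> real" where
  "sgnw w1 T = (-1) ^ card T * (\<Prod>y\<in>T. w1 y)"

lemma sgnw_insert: "finite T \<Longrightarrow> u \<notin> T \<Longrightarrow> sgnw w1 (insert u T) = - w1 u * sgnw w1 T"
  by (simp add: sgnw_def)

lemma eta_sgnw: "eta_w U E w w1 = (\<Sum>S\<in>Pow U. smult (sgnw w1 (U - S)) (mu_w E w S))"
  by (simp add: eta_w_def sgnw_def)

lemma eta_rec: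
  assumes E2: "\<forall>e\<in>E. card e = 2" and fin: "finite U" and u: "u \<in> U"
  shows "eta_w U E w w1 = [:- w1 u, 1:] * eta_w (U - {u}) E w w1 -
     (\<Sum>v\<in>{v\<in>U-{u}. {u,v}\<in>E}. smult ((cmod (w {u,v}))\<^sup>2) (eta_w (U - {u} - {v}) E w w1))"
proof -
  define U' where "U' = U - {u}"
  have U: "U = insert u U'" and uU': "u \<notin> U'" and finU': "finite U'" using u fin by (auto simp: U'_def)
  define N where "N = {v\<in>U'. {u,v}\<in>E}"
  have finN: "finite N" using finU' by (auto simp: N_def)
  define g where "g S = smult (sgnw w1 (U - S)) (mu_w E w S)" for S
  have "eta_w U E w w1 = (\<Sum>S\<in>Pow U'. g S) + (\<Sum>S\<in>insert u ` Pow U'. g S)"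
  proof -
    have "eta_w U E w w1 = (\<Sum>S\<in>Pow U. g S)" by (simp add: eta_sgnw g_def)
    also have "\<dots> = (\<Sum>S\<in>Pow U'. g S) + (\<Sum>S\<in>insert u ` Pow U'. g S)"
      unfolding U Pow_insert by (rule sum.union_disjoint) (use finU' uU' in auto)
    finally show ?thesis .
  qed
  also have "(\<Sum>S\<in>Pow U'. g S) = smult (- w1 u) (eta_w U' E w w1)"
  proof -
    have "(\<Sum>S\<in>Pow U'. g S) = (\<Sum>S\<in>Pow U'. smult (- w1 u) (smult (sgnw w1 (U' - S)) (mu_w E w S)))"
    proof (rule sum.cong[OF refl])
      fix S assume "S \<in> Pow U'"
      hence "U - S = insert u (U' - S)" using U uU' by auto
      moreover have "finite (U' - S)" "u \<notin> U' - S" using finU' uU' by auto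
      ultimately show "g S = smult (- w1 u) (smult (sgnw w1 (U' - S)) (mu_w E w S))"
        by (simp add: g_def sgnw_insert)
    qed
    also have "\<dots> = smult (- w1 u) (eta_w U' E w w1)" by (simp add: eta_sgnw smult_sum_right)
    finally show ?thesis .
  qed
  also have "(\<Sum>S\<in>insert u ` Pow U'. g S) = (\<Sum>S\<in>Pow U'. g (insert u S))"
    by (rule sum.reindex[unfolded comp_def]) (use uU' in \<open>auto simp: inj_on_def\<close>)
  also have "\<dots> = (\<Sum>S\<in>Pow U'. pCons 0 (smult (sgnw w1 (U' - S)) (mu_w E w S))
        - (\<Sum>v\<in>{v\<in>S. {u,v}\<in>E}. smult ((cmod (w {u,v}))\<^sup>2) (smult (sgnw w1 (U' - S)) (mu_w E w (S - {v})))))"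
  proof (rule sum.cong[OF refl])
    fix S assume S: "S \<in> Pow U'"
    have fS: "finite S" using S finU' by (auto intro: finite_subset)
    have uS: "u \<notin> S" using S uU' by auto
    have e1: "U - insert u S = U' - S" using U uU' S by auto
    have e2: "insert u S - {u} = S" using uS by auto
    have e3: "{v\<in>insert u S-{u}. {u,v}\<in>E} = {v\<in>S. {u,v}\<in>E}" using uS by auto
    show "g (insert u S) = pCons 0 (smult (sgnw w1 (U' - S)) (mu_w E w S))
        - (\<Sum>v\<in>{v\<in>S. {u,v}\<in>E}. smult ((cmod (w {u,v}))\<^sup>2) (smult (sgnw w1 (U' - S)) (mu_w E w (S - {v}))))"
    proof -
      have m: "mu_w E w (insert u S) = pCons 0 (mu_w E w S) -
         (\<Sum>v\<in>{v\<in>S. {u,v}\<in>E}. smult ((cmod (w {u,v}))\<^sup>2) (mu_w E w (S - {v})))"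
        using mu_rec[OF E2, of "insert u S" u w] fS unfolding e2 e3 by simp
      show ?thesis unfolding g_def e1 m
        by (simp add: smult_diff_right smult_sum_right mult.commute)
    qed
  qed
  also have "\<dots> = pCons 0 (eta_w U' E w w1) -
      (\<Sum>S\<in>Pow U'. \<Sum>v\<in>{v\<in>N. v \<in> S}. smult ((cmod (w {u,v}))\<^sup>2) (smult (sgnw w1 (U' - S)) (mu_w E w (S - {v}))))"
  proof -
    have "pCons 0 (\<Sum>S\<in>Pow U'. smult (sgnw w1 (U' - S)) (mu_w E w S)) =
       (\<Sum>S\<in>Pow U'. pCons 0 (smult (sgnw w1 (U' - S)) (mu_w E w S)))"
      by (rule pCons0_sum)
    moreover have "{v\<in>S. {u,v}\<in>E} = {v\<in>N. v \<in> S}" if "S \<in> Pow U'" for S using that by (auto simp: N_def)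
    ultimately show ?thesis by (simp add: sum_subtractf eta_sgnw)
  qed
  also have "(\<Sum>S\<in>Pow U'. \<Sum>v\<in>{v\<in>N. v \<in> S}. smult ((cmod (w {u,v}))\<^sup>2) (smult (sgnw w1 (U' - S)) (mu_w E w (S - {v}))))
     = (\<Sum>v\<in>N. \<Sum>S\<in>{S\<in>Pow U'. v \<in> S}. smult ((cmod (w {u,v}))\<^sup>2) (smult (sgnw w1 (U' - S)) (mu_w E w (S - {v}))))"
    by (rule sum.swap_restrict) (use finU' finN in auto)
  also have "\<dots> = (\<Sum>v\<in>N. smult ((cmod (w {u,v}))\<^sup>2) (eta_w (U' - {v}) E w w1))"
  proof (rule sum.cong[OF refl])
    fix v assume vN: "v \<in> N"
    have vU': "v \<in> U'" using vN by (auto simp: N_def)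
    have img: "{S\<in>Pow U'. v \<in> S} = insert v ` Pow (U' - {v})" using vU' by (auto intro!: image_eqI[where x="_ - {v}"])
    have inj: "inj_on (insert v) (Pow (U' - {v}))" by (auto simp: inj_on_def)
    have "(\<Sum>S\<in>{S\<in>Pow U'. v \<in> S}. smult ((cmod (w {u,v}))\<^sup>2) (smult (sgnw w1 (U' - S)) (mu_w E w (S - {v}))))
       = (\<Sum>S\<in>Pow (U' - {v}). smult ((cmod (w {u,v}))\<^sup>2) (smult (sgnw w1 (U' - insert v S)) (mu_w E w (insert v S - {v}))))"
      unfolding img by (rule sum.reindex[OF inj, unfolded comp_def])
    also have "\<dots> = (\<Sum>S\<in>Pow (U' - {v}). smult ((cmod (w {u,v}))\<^sup>2) (smult (sgnw w1 ((U' - {v}) - S)) (mu_w E w S)))"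
    proof (rule sum.cong[OF refl])
      fix S assume "S \<in> Pow (U' - {v})"
      hence "U' - insert v S = (U' - {v}) - S" "insert v S - {v} = S" by auto
      thus "smult ((cmod (w {u,v}))\<^sup>2) (smult (sgnw w1 (U' - insert v S)) (mu_w E w (insert v S - {v}))) =
         smult ((cmod (w {u,v}))\<^sup>2) (smult (sgnw w1 ((U' - {v}) - S)) (mu_w E w S))" by simp
    qed
    also have "\<dots> = smult ((cmod (w {u,v}))\<^sup>2) (eta_w (U' - {v}) E w w1)"
      by (simp add: eta_sgnw smult_sum_right)
    finally show "(\<Sum>S\<in>{S\<in>Pow U'. v \<in> S}. smult ((cmod (w {u,v}))\<^sup>2) (smult (sgnw w1 (U' - S)) (mu_w E w (S - {v}))))
       = smult ((cmod (w {u,v}))\<^sup>2) (eta_w (U' - {v}) E w w1)" .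
  qed
  finally show ?thesis by (simp add: U'_def N_def algebra_simps)
qed

lemma pderiv_sum: "pderiv (\<Sum>i\<in>A. f i) = (\<Sum>i\<in>A. pderiv (f i))"
  by (induction A rule: infinite_finite_induct) (auto simp: pderiv_add)

locale WG =
  fixes E :: "'a set set" and w :: "'a set \<Rightarrow> complex" and w1 :: "'a \<Rightarrow> real"
  assumes E2: "\<forall>e\<in>E. card e = 2" and wnz: "\<forall>e\<in>E. w e \<noteq> 0"
begin

abbreviation ETA where "ETA U \<equiv> eta_w U E w w1"
definition cw where "cw u v = (cmod (w {u,v}))\<^sup>2"
definition NB where "NB U u = {v\<in>U-{u}. {u,v}\<in>E}"

lemma cw_nonneg: "cw u v \<ge> 0" by (simp add: cw_def)
lemma cw_pos: "{u,v} \<in> E \<Longrightarrow> cw u v > 0" using wnz by (simp add: cw_def)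
lemma finite_NB: "finite U \<Longrightarrow> finite (NB U u)" by (simp add: NB_def)

lemma rec: "finite U \<Longrightarrow> u \<in> U \<Longrightarrow>
  ETA U = [:-w1 u,1:] * ETA (U-{u}) - (\<Sum>v\<in>NB U u. smult (cw u v) (ETA (U-{u}-{v})))"
  using eta_rec[OF E2] by (simp add: NB_def cw_def)

lemma eta_empty: "ETA {} = 1"
proof -
  have "induced_edges E {} = {}" using E2 by (auto simp: induced_edges_def)
  hence "matchings (induced_edges E {}) = {{}}" by (auto simp: matchings_def)
  thus ?thesis by (simp add: eta_w_def mu_w_def)
qed

lemma deg: "finite U \<Longrightarrow> degree (ETA U) = card U \<and> coeff (ETA U) (card U) = 1"
proof (induction "card U" arbitrary: U rule: less_induct)
  case less
  show ?case
  proof (cases "U = {}")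
    case True then show ?thesis by (simp add: eta_empty)
  next
    case False
    then obtain u where u: "u \<in> U" by auto
    define n where "n = card U"
    have cU: "card (U - {u}) = n - 1" "n \<ge> 1" using u less.prems by (auto simp: n_def card_gt_0_iff Suc_le_eq)
    have IH1: "degree (ETA (U-{u})) = n - 1" "coeff (ETA (U-{u})) (n-1) = 1"
      using less.hyps[of "U-{u}"] less.prems u cU by (auto simp: n_def card_gt_0_iff)
    have IH2: "degree (ETA (U-{u}-{v})) \<le> n - 2" if "v \<in> NB U u" for v
    proof -
      have "v \<in> U - {u}" using that by (auto simp: NB_def)
      hence "card (U-{u}-{v}) = n - 2" using cU less.prems by simp
      moreover have "card (U-{u}-{v}) < card U" using less.prems u by (intro psubset_card_mono) auto
      ultimately show ?thesis using less.hyps[of "U-{u}-{v}"] less.prems by (auto simp: n_def)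
    qed
    define A where "A = [:-w1 u,1:] * ETA (U-{u})"
    define B where "B = (\<Sum>v\<in>NB U u. smult (cw u v) (ETA (U-{u}-{v})))"
    have nz: "ETA (U-{u}) \<noteq> 0" using IH1 by auto
    have "degree A = degree [:-w1 u,1:] + degree (ETA (U-{u}))"
      unfolding A_def by (rule degree_mult_eq) (use nz in auto)
    hence dA: "degree A = n" using IH1 cU by simp
    have cA: "coeff A n = 1"
    proof -
      have "lead_coeff A = lead_coeff [:-w1 u,1:] * lead_coeff (ETA (U-{u}))"
        unfolding A_def by (rule lead_coeff_mult)
      hence "lead_coeff A = 1" using IH1 by simp
      thus ?thesis using dA by simp
    qed
    have dB: "degree B \<le> n - 2"
      unfolding B_def by (rule degree_sum_le) (use finite_NB less.prems IH2 degree_smult_le order_trans in auto)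
    have cB: "coeff B n = 0" using dB cU by (intro coeff_eq_0) auto
    have e: "ETA U = A - B" using rec[OF less.prems u] by (simp add: A_def B_def)
    have c: "coeff (ETA U) n = 1" using cA cB e by simp
    have "degree (ETA U) \<le> n" unfolding e using dA dB by (intro degree_diff_le) auto
    moreover have "n \<le> degree (ETA U)" using c by (intro le_degree) auto
    ultimately show ?thesis using c by (simp add: n_def)
  qed
qed

lemma eta_nz: "finite U \<Longrightarrow> ETA U \<noteq> 0"
  using deg[of U] by auto

definition D where "D u U = ETA (U-{u}) * pderiv (ETA U) - ETA U * pderiv (ETA (U-{u}))"

lemma D_rec: assumes "finite U" "u \<in> U"
  shows "D u U = ETA (U-{u})^2 + (\<Sum>v\<in>NB U u. smult (cw u v) (D v (U-{u})))"
proof -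
  define P where "P = ETA (U-{u})"
  define L where "L = [:-w1 u,1:]"
  define Q where "Q v = ETA (U-{u}-{v})" for v
  define S where "S = (\<Sum>v\<in>NB U u. smult (cw u v) (Q v))"
  define S' where "S' = (\<Sum>v\<in>NB U u. smult (cw u v) (pderiv (Q v)))"
  have e: "ETA U = L * P - S" using rec[OF assms] by (simp add: L_def P_def Q_def S_def)
  have pL: "pderiv L = 1" by (simp add: L_def pderiv_pCons)
  have pS: "pderiv S = S'" by (simp add: S_def S'_def pderiv_sum pderiv_smult)
  have pLP: "pderiv (L * P) = P + L * pderiv P" by (simp add: pderiv_mult pL)
  have pe: "pderiv (ETA U) = P + L * pderiv P - S'"
    unfolding e pderiv_diff pS pLP ..
  have "D u U = P * (P + L * pderiv P - S') - (L * P - S) * pderiv P"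
    unfolding D_def P_def[symmetric] pe unfolding e by simp
  also have "\<dots> = P^2 + (S * pderiv P - P * S')" by (simp add: algebra_simps power2_eq_square)
  also have "S * pderiv P - P * S' = (\<Sum>v\<in>NB U u. smult (cw u v) (Q v * pderiv P - P * pderiv (Q v)))"
  proof -
    have 1: "S * pderiv P = (\<Sum>v\<in>NB U u. smult (cw u v) (Q v * pderiv P))"
      by (simp add: S_def sum_distrib_right)
    have 2: "P * S' = (\<Sum>v\<in>NB U u. smult (cw u v) (P * pderiv (Q v)))"
      by (simp add: S'_def sum_distrib_left)
    show ?thesis unfolding 1 2 sum_subtractf[symmetric] smult_diff_right ..
  qed
  also have "\<dots> = (\<Sum>v\<in>NB U u. smult (cw u v) (D v (U-{u})))"
  proof (rule sum.cong[OF refl])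
    fix v assume "v \<in> NB U u"
    show "smult (cw u v) (Q v * pderiv P - P * pderiv (Q v)) = smult (cw u v) (D v (U-{u}))"
      by (simp add: D_def Q_def P_def)
  qed
  finally show ?thesis by (simp add: P_def)
qed

lemma D_nonneg: "finite U \<Longrightarrow> u \<in> U \<Longrightarrow> poly (D u U) x \<ge> 0"
proof (induction "card U" arbitrary: U u rule: less_induct)
  case less
  have "poly (D u U) x = (poly (ETA (U-{u})) x)^2 + (\<Sum>v\<in>NB U u. cw u v * poly (D v (U-{u})) x)"
    using D_rec[OF less.prems] by (simp add: poly_sum)
  also have "\<dots> \<ge> 0"
  proof (intro add_nonneg_nonneg sum_nonneg mult_nonneg_nonneg cw_nonneg)
    fix v assume v: "v \<in> NB U u"
    have "card (U - {u}) < card U" using less.prems by (meson card_Diff1_less)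
    thus "poly (D v (U-{u})) x \<ge> 0" using less.hyps[of "U-{u}" v] less.prems v by (auto simp: NB_def)
  qed simp
  finally show ?case .
qed

fun pw where "pw [] = 1" | "pw [x] = 1" | "pw (x#y#r) = cw x y * pw (y#r)"

definition epath where "epath p \<longleftrightarrow> p \<noteq> [] \<and> distinct p \<and> (\<forall>i. Suc i < length p \<longrightarrow> {p ! i, p ! Suc i} \<in> E)"

lemma epath_tl: assumes "epath (x#y#r)" shows "epath (y#r) \<and> {x,y} \<in> E \<and> x \<noteq> y"
proof -
  have a: "distinct (x#y#r)" and h: "\<forall>i. Suc i < length (x#y#r) \<longrightarrow> {(x#y#r) ! i, (x#y#r) ! Suc i} \<in> E"
    using assms by (auto simp: epath_def)
  have "{(y#r)!i, (y#r)!Suc i} \<in> E" if "Suc i < length (y#r)" for i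
    using h[rule_format, of "Suc i"] that by simp
  moreover have "{x,y} \<in> E" using h[rule_format, of 0] by simp
  ultimately show ?thesis using a by (auto simp: epath_def)
qed

lemma pw_pos: "epath p \<Longrightarrow> pw p > 0"
proof (induction p rule: pw.induct)
  case (3 x y r)
  then show ?case using epath_tl[OF 3(2)] cw_pos by auto
qed (auto simp: epath_def)

lemma D_path: "finite U \<Longrightarrow> epath p \<Longrightarrow> set p \<subseteq> U \<Longrightarrow>
   poly (D (hd p) U) x \<ge> pw p * (poly (ETA (U - set p)) x)^2"
proof (induction p arbitrary: U rule: pw.induct)
  case 1 then show ?case by (simp add: epath_def)
next
  case (2 u)
  have "poly (D u U) x = (poly (ETA (U-{u})) x)^2 + (\<Sum>v\<in>NB U u. cw u v * poly (D v (U-{u})) x)"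
    using D_rec[of U u] 2 by (simp add: poly_sum)
  moreover have "(\<Sum>v\<in>NB U u. cw u v * poly (D v (U-{u})) x) \<ge> 0"
    using 2 by (intro sum_nonneg mult_nonneg_nonneg cw_nonneg D_nonneg) (auto simp: NB_def)
  ultimately show ?case by simp
next
  case (3 u v r)
  have ep: "epath (v#r)" "{u,v} \<in> E" "u \<noteq> v" using epath_tl[OF 3(3)] by auto
  have uU: "u \<in> U" using 3 by auto
  have vN: "v \<in> NB U u" using ep 3(4) by (auto simp: NB_def)
  have ur: "u \<notin> set (v#r)" using 3(3) by (auto simp: epath_def)
  have IH: "poly (D v (U-{u})) x \<ge> pw (v#r) * (poly (ETA (U - {u} - set (v#r))) x)^2"
    using 3(1)[of "U-{u}"] 3(2,4) ep ur by auto
  have "poly (D u U) x = (poly (ETA (U-{u})) x)^2 + (\<Sum>v\<in>NB U u. cw u v * poly (D v (U-{u})) x)"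
    using D_rec[OF 3(2) uU] by (simp add: poly_sum)
  moreover have "(\<Sum>v\<in>NB U u. cw u v * poly (D v (U-{u})) x) \<ge> cw u v * poly (D v (U-{u})) x"
    by (rule member_le_sum) (use vN 3(2) finite_NB in \<open>auto intro!: mult_nonneg_nonneg cw_nonneg D_nonneg simp: NB_def\<close>)
  moreover have "cw u v * poly (D v (U-{u})) x \<ge> cw u v * (pw (v#r) * (poly (ETA (U - {u} - set (v#r))) x)^2)"
    using IH cw_nonneg by (rule mult_left_mono)
  moreover have "U - {u} - set (v#r) = U - set (u#v#r)" by auto
  hence "pw (u#v#r) * (poly (ETA (U - set (u#v#r))) x)^2 = cw u v * (pw (v#r) * (poly (ETA (U - {u} - set (v#r))) x)^2)"
    by simp
  moreover have "(poly (ETA (U-{u})) x)^2 \<ge> 0" by simp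
  ultimately show ?case by (simp only: list.sel(1))
qed

end

lemma dvd_pderiv_pow:
  fixes p :: "real poly"
  assumes "[:-t,1:]^m dvd p" shows "[:-t,1:]^(m-1) dvd pderiv p"
proof (cases m)
  case 0 then show ?thesis by simp
next
  case (Suc n)
  then obtain r where r: "p = [:-t,1:]^Suc n * r" using assms by (auto elim: dvdE)
  have "pderiv p = [:-t,1:]^Suc n * pderiv r + r * (smult (of_nat (Suc n)) ([:-t,1:]^n) * pderiv [:-t,1:])"
    unfolding r pderiv_mult pderiv_power_Suc ..
  also have "\<dots> = [:-t,1:]^n * ([:-t,1:] * pderiv r + smult (of_nat (Suc n)) (r * pderiv [:-t,1:]))"
    by (simp add: algebra_simps)
  finally show ?thesis using Suc by simp
qed

lemma order_sq:
  fixes f g :: "real poly"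
  assumes c: "c > 0" and g: "g \<noteq> 0" and le: "\<And>x. poly f x \<ge> c * (poly g x)^2"
  shows "f \<noteq> 0 \<and> order t f \<le> 2 * order t g"
proof
  have "finite {x. poly g x = 0}" using g by (rule poly_roots_finite)
  then obtain x where "poly g x \<noteq> 0" using ex_new_if_finite[OF infinite_UNIV_char_0] by blast
  hence "poly f x > 0" using le[of x] c by (smt (verit) mult_pos_pos zero_less_power2)
  thus f0: "f \<noteq> 0" by auto
  show "order t f \<le> 2 * order t g"
  proof (rule ccontr)
    assume nt: "\<not> ?thesis"
    define n where "n = order t g"
    obtain g1 where g1: "g = [:-t,1:]^n * g1" "\<not> [:-t,1:] dvd g1" using order_decomp[OF g] n_def by blast
    have g1t: "poly g1 t \<noteq> 0" using g1(2) by (simp add: poly_eq_0_iff_dvd)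
    have "[:-t,1:]^(2*n+1) dvd f" unfolding order_divides using nt f0 by (simp add: n_def)
    then obtain f1 where f1: "f = [:-t,1:]^(2*n+1) * f1" by (auto elim: dvdE)
    define h where "h x = (x - t) * poly f1 x - c * (poly g1 x)^2" for x
    have hge: "h x \<ge> 0" if "x \<noteq> t" for x
    proof -
      have pos: "(x - t)^(2*n) > 0" using that by (simp add: power_mult zero_less_power2)
      have "(x - t)^(2*n) * ((x-t) * poly f1 x) \<ge> (x - t)^(2*n) * (c * (poly g1 x)^2)"
        using le[of x] unfolding f1 g1(1) by (simp add: power_mult_distrib power_mult power_add algebra_simps)
      hence "(x-t) * poly f1 x \<ge> c * (poly g1 x)^2" using pos by (simp add: mult_le_cancel_left)
      thus ?thesis by (simp add: h_def)
    qed
    have cont: "(h \<longlongrightarrow> h t) (at t)"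
      unfolding h_def by (intro tendsto_intros)
    have "h t \<ge> 0"
      by (rule tendsto_lowerbound[OF cont]) (auto intro: eventually_mono[OF eventually_neq_at_within[of t t UNIV]] hge)
    moreover have "h t < 0" using g1t c by (simp add: h_def)
    ultimately show False by simp
  qed
qed

context WG begin

lemma epath_single: "epath [u]" by (simp add: epath_def)

lemma mult_path:
  assumes fin: "finite U" and p: "epath p" "set p \<subseteq> U"
  shows "order t (ETA U) \<le> Suc (order t (ETA (U - set p)))"
proof -
  define u where "u = hd p"
  have u: "u \<in> U" using p by (cases p) (auto simp: u_def epath_def)
  define m where "m = order t (ETA U)"
  define k where "k = order t (ETA (U-{u}))"
  define j where "j = order t (ETA (U - set p))"
  define q where "q = [:-t,1:]"
  have finU': "finite (U-{u})" using fin by simp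
  have D1: "\<And>x. poly (D u U) x \<ge> 1 * (poly (ETA (U-{u})) x)^2"
    using D_path[OF fin epath_single, of u] u by simp
  have o1: "D u U \<noteq> 0 \<and> order t (D u U) \<le> 2 * k"
    using order_sq[OF _ eta_nz[OF finU'] D1] by (simp add: k_def)
  have D2: "\<And>x. poly (D u U) x \<ge> pw p * (poly (ETA (U - set p)) x)^2"
    using D_path[OF fin p] by (simp add: u_def)
  have o2: "order t (D u U) \<le> 2 * j"
    using order_sq[OF pw_pos[OF p(1)] eta_nz D2] fin by (simp add: j_def)
  have d1: "q^m dvd ETA U" by (simp add: q_def m_def order_1)
  have d2: "q^k dvd ETA (U-{u})" by (simp add: q_def k_def order_1)
  have d3: "q^(m-1) dvd pderiv (ETA U)" using dvd_pderiv_pow d1 q_def by blast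
  have d4: "q^(k-1) dvd pderiv (ETA (U-{u}))" using dvd_pderiv_pow d2 q_def by blast
  define s where "s = min (k + (m-1)) (m + (k-1))"
  have "q^s dvd ETA (U-{u}) * pderiv (ETA U)"
  proof -
    have "q^(k + (m-1)) dvd ETA (U-{u}) * pderiv (ETA U)" unfolding power_add using d2 d3 by (rule mult_dvd_mono)
    moreover have "q^s dvd q^(k + (m-1))" by (rule le_imp_power_dvd) (simp add: s_def)
    ultimately show ?thesis by (rule dvd_trans[rotated])
  qed
  moreover have "q^s dvd ETA U * pderiv (ETA (U-{u}))"
  proof -
    have "q^(m + (k-1)) dvd ETA U * pderiv (ETA (U-{u}))" unfolding power_add using d1 d4 by (rule mult_dvd_mono)
    moreover have "q^s dvd q^(m + (k-1))" by (rule le_imp_power_dvd) (simp add: s_def)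
    ultimately show ?thesis by (rule dvd_trans[rotated])
  qed
  ultimately have "q^s dvd D u U" unfolding D_def by (rule dvd_diff)
  hence "s \<le> order t (D u U)" using o1 by (simp add: order_divides q_def)
  hence "s \<le> 2 * k" "s \<le> 2 * j" using o1 o2 by auto
  thus ?thesis unfolding m_def[symmetric] j_def[symmetric] s_def by linarith
qed

lemma mult_cover:
  assumes "finite P" "\<forall>p\<in>P. epath p" "\<forall>p\<in>P. \<forall>q\<in>P. p \<noteq> q \<longrightarrow> set p \<inter> set q = {}"
    "U = (\<Union>p\<in>P. set p)"
  shows "order t (ETA U) \<le> card P"
  using assms
proof (induction P arbitrary: U rule: finite_induct)
  case empty then show ?case by (simp add: eta_empty)
next
  case (insert p P)
  define U' where "U' = (\<Union>p\<in>P. set p)"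
  have disj: "set p \<inter> U' = {}" using insert.prems(2) insert.hyps(2) by (fastforce simp: U'_def)
  have e: "U - set p = U'" using insert.prems(3) disj by (auto simp: U'_def)
  have fin: "finite U" using insert.prems(3) insert.hyps(1) by auto
  have "order t (ETA U) \<le> Suc (order t (ETA U'))"
    using mult_path[OF fin, of p t] insert.prems e by auto
  also have "order t (ETA U') \<le> card P"
    using insert.IH[of U'] insert.prems by (auto simp: U'_def)
  finally show ?case using insert.hyps by simp
qed

end

abbreviation CP :: "real poly \<Rightarrow> complex poly" where "CP p \<equiv> map_poly complex_of_real p"

lemma CP_add: "CP (p + q) = CP p + CP q" by (rule poly_eqI) (simp add: coeff_map_poly)
lemma CP_diff: "CP (p - q) = CP p - CP q" by (rule poly_eqI) (simp add: coeff_map_poly)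
lemma CP_smult: "CP (smult c p) = smult (of_real c) (CP p)" by (rule poly_eqI) (simp add: coeff_map_poly)
lemma CP_mult: "CP (p * q) = CP p * CP q"
  by (rule poly_eqI) (simp add: coeff_map_poly coeff_mult)
lemma CP_sum: "CP (\<Sum>i\<in>A. f i) = (\<Sum>i\<in>A. CP (f i))"
  by (induction A rule: infinite_finite_induct) (auto simp: CP_add)
lemma CP_pCons: "CP (pCons a p) = pCons (of_real a) (CP p)" by (rule map_poly_pCons) simp
lemma CP_lin: "CP [:a, b:] = [:of_real a, of_real b:]" by (simp add: map_poly_pCons)
lemma poly_CP_real: "poly (CP p) (of_real x) = of_real (poly p x)"
  by (induction p) (auto simp: map_poly_pCons)
lemma degree_CP: "degree (CP p) = degree p" by (rule degree_map_poly) auto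
lemma CP_eq_0: "CP p = 0 \<longleftrightarrow> p = 0" using degree_CP[of p]
  by (metis coeff_map_poly degree_0 leading_coeff_0_iff of_real_0 of_real_eq_0_iff)

lemma Im_inverse_neg: "Im a > 0 \<Longrightarrow> Im (inverse a) < 0"
proof -
  assume "Im a > 0"
  hence "a \<noteq> 0" by auto
  have "Im (inverse a) = Im (1 / a)" by (simp add: divide_inverse)
  also have "\<dots> = - Im a / (norm a)^2" by (simp add: Im_divide')
  finally show ?thesis using \<open>Im a > 0\<close> \<open>a \<noteq> 0\<close> by (simp add: divide_neg_pos)
qed

context WG begin

lemma half_plane: "finite U \<Longrightarrow> Im z > 0 \<Longrightarrow>
   poly (CP (ETA U)) z \<noteq> 0 \<and> (\<forall>u\<in>U. Im (poly (CP (ETA U)) z / poly (CP (ETA (U-{u}))) z) > 0)"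
proof (induction "card U" arbitrary: U rule: less_induct)
  case less
  have main: "poly (CP (ETA U)) z \<noteq> 0 \<and> Im (poly (CP (ETA U)) z / poly (CP (ETA (U-{u}))) z) > 0"
    if u: "u \<in> U" for u
  proof -
    define ev where "ev V = poly (CP (ETA V)) z" for V
    have lt: "card (U-{u}) < card U" using less.prems u by (meson card_Diff1_less)
    have IH: "ev (U-{u}) \<noteq> 0" "\<forall>v\<in>U-{u}. Im (ev (U-{u}) / ev (U-{u}-{v})) > 0"
      using less.hyps[OF lt] less.prems by (auto simp: ev_def)
    have IH2: "ev (U-{u}-{v}) \<noteq> 0" if "v \<in> U - {u}" for v
    proof -
      have "card (U-{u}-{v}) < card U" using lt that less.prems by (meson card_Diff1_less finite_Diff order.strict_trans)
      thus ?thesis using less.hyps less.prems by (auto simp: ev_def)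
    qed
    have e: "ev U = (z - of_real (w1 u)) * ev (U-{u}) - (\<Sum>v\<in>NB U u. of_real (cw u v) * ev (U-{u}-{v}))"
      unfolding ev_def rec[OF less.prems(1) u] CP_diff CP_mult CP_sum CP_smult CP_lin
      by (simp add: poly_sum algebra_simps)
    define R where "R = ev U / ev (U-{u})"
    have R: "R = (z - of_real (w1 u)) - (\<Sum>v\<in>NB U u. of_real (cw u v) * (ev (U-{u}-{v}) / ev (U-{u})))"
      unfolding R_def e using IH(1) by (simp add: diff_divide_distrib sum_divide_distrib)
    have "Im R = Im z - (\<Sum>v\<in>NB U u. cw u v * Im (ev (U-{u}-{v}) / ev (U-{u})))"
      unfolding R by (simp add: Im_sum times_divide_eq_right[symmetric] del: times_divide_eq_right)
    moreover have "Im (ev (U-{u}-{v}) / ev (U-{u})) < 0" if "v \<in> NB U u" for v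
    proof -
      have "v \<in> U - {u}" using that by (auto simp: NB_def)
      hence "Im (ev (U-{u}) / ev (U-{u}-{v})) > 0" using IH(2) by auto
      hence "Im (inverse (ev (U-{u}) / ev (U-{u}-{v}))) < 0" by (rule Im_inverse_neg)
      thus ?thesis by (simp add: inverse_divide)
    qed
    hence "(\<Sum>v\<in>NB U u. cw u v * Im (ev (U-{u}-{v}) / ev (U-{u}))) \<le> 0"
      by (intro sum_nonpos mult_nonneg_nonpos cw_nonneg) (auto intro: less_imp_le)
    ultimately have "Im R > 0" using less.prems(2) by linarith
    hence "R \<noteq> 0" by auto
    hence "ev U \<noteq> 0" by (simp add: R_def)
    thus ?thesis using \<open>Im R > 0\<close> by (simp add: R_def ev_def)
  qed
  show ?case
  proof (cases "U = {}")
    case True then show ?thesis by (simp add: eta_empty)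
  next
    case False then obtain u where "u \<in> U" by auto
    then show ?thesis using main by auto
  qed
qed

lemma roots_real: "finite U \<Longrightarrow> poly (CP (ETA U)) z = 0 \<Longrightarrow> Im z = 0"
proof (rule ccontr)
  assume fin: "finite U" and r: "poly (CP (ETA U)) z = 0" and nz: "Im z \<noteq> 0"
  show False
  proof (cases "Im z > 0")
    case True then show ?thesis using half_plane[OF fin] r by auto
  next
    case False
    hence "Im (cnj z) > 0" using nz by simp
    moreover have "poly (CP (ETA U)) (cnj z) = cnj (poly (CP (ETA U)) z)"
    proof -
      have "map_poly cnj (CP (ETA U)) = CP (ETA U)"
        by (simp add: map_poly_map_poly comp_def)
      thus ?thesis by (metis poly_cnj complex_cnj_cnj)
    qed
    ultimately show ?thesis using half_plane[OF fin, of "cnj z"] r by auto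
  qed
qed

end

lemma CP_power: "CP (p ^ n) = CP p ^ n"
  by (induction n) (auto simp: CP_mult)

lemma order_other:
  fixes r :: "real poly"
  assumes "a \<noteq> x" "r \<noteq> 0" shows "order x ([:-a,1:]^k * r) = order x r"
proof -
  have "[:-a,1:]^k * r \<noteq> 0" using assms by simp
  hence "order x ([:-a,1:]^k * r) = order x ([:-a,1:]^k) + order x r" by (rule order_mult)
  moreover have "order x ([:-a,1:]^k) = 0" using assms by (intro order_0I) simp
  ultimately show ?thesis by simp
qed

lemma sum_order_le:
  fixes p :: "real poly"
  assumes "finite A" "p \<noteq> 0" shows "(\<Sum>x\<in>A. order x p) \<le> degree p"
  using assms
proof (induction A arbitrary: p rule: finite_induct)
  case empty then show ?case by simp
next
  case (insert a A)
  obtain r where r: "p = [:-a,1:]^order a p * r" "\<not> [:-a,1:] dvd r" using order_decomp[OF insert.prems] by blast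
  have r0: "r \<noteq> 0" using r(2) by auto
  have "(\<Sum>x\<in>A. order x p) = (\<Sum>x\<in>A. order x r)"
  proof (rule sum.cong[OF refl])
    fix x assume "x \<in> A" hence "a \<noteq> x" using insert.hyps by auto
    thus "order x p = order x r" using order_other[OF _ r0] r(1) by metis
  qed
  also have "\<dots> \<le> degree r" using insert.IH[OF r0] .
  finally have "(\<Sum>x\<in>A. order x p) \<le> degree r" .
  moreover have "degree p = order a p + degree r"
    by (subst r(1), subst degree_mult_eq) (use r0 in \<open>auto simp: degree_linear_power\<close>)
  ultimately show ?case using insert.hyps by simp
qed

lemma sum_order_ge_real:
  fixes p :: "real poly"
  assumes "p \<noteq> 0" "\<And>z. poly (CP p) z = 0 \<Longrightarrow> Im z = 0"
  shows "degree p \<le> (\<Sum>x\<in>{x. poly p x = 0}. order x p)"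
  using assms
proof (induction "degree p" arbitrary: p rule: less_induct)
  case less
  show ?case
  proof (cases "degree p = 0")
    case True then show ?thesis by simp
  next
    case False
    hence "\<not> constant (poly (CP p))" by (simp add: constant_degree degree_CP)
    then obtain z where z: "poly (CP p) z = 0" using fundamental_theorem_of_algebra by blast
    define t where "t = Re z"
    have "z = of_real t" using less.prems(2)[OF z] by (simp add: t_def complex_eq_iff)
    hence pt: "poly p t = 0" using z by (simp add: poly_CP_real)
    define k where "k = order t p"
    have k: "k > 0" using pt less.prems(1) by (simp add: k_def order_gt_0_iff)
    obtain r where r: "p = [:-t,1:]^k * r" "\<not> [:-t,1:] dvd r" using order_decomp[OF less.prems(1)] k_def by blast
    have r0: "r \<noteq> 0" using r(2) by auto
    have rt: "poly r t \<noteq> 0" using r(2) by (simp add: poly_eq_0_iff_dvd)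
    have dp: "degree p = k + degree r"
      by (subst r(1), subst degree_mult_eq) (use r0 in \<open>auto simp: degree_linear_power\<close>)
    have rr: "Im z = 0" if "poly (CP r) z = 0" for z
    proof -
      have "poly (CP p) z = 0" using that by (subst r(1)) (simp add: CP_mult CP_power)
      thus ?thesis by (rule less.prems(2))
    qed
    have IH: "degree r \<le> (\<Sum>x\<in>{x. poly r x = 0}. order x r)"
      using less.hyps[of r] dp k r0 rr by auto
    have Z: "{x. poly p x = 0} = insert t {x. poly r x = 0}"
      using k by (subst r(1)) auto
    have tn: "t \<notin> {x. poly r x = 0}" using rt by auto
    have finr: "finite {x. poly r x = 0}" using r0 by (rule poly_roots_finite)
    have "(\<Sum>x\<in>{x. poly p x = 0}. order x p) = k + (\<Sum>x\<in>{x. poly r x = 0}. order x p)"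
      unfolding Z using finr tn by (simp add: k_def)
    also have "(\<Sum>x\<in>{x. poly r x = 0}. order x p) = (\<Sum>x\<in>{x. poly r x = 0}. order x r)"
    proof (rule sum.cong[OF refl])
      fix x assume "x \<in> {x. poly r x = 0}" hence "t \<noteq> x" using tn by auto
      thus "order x p = order x r" using order_other[OF _ r0] r(1) by metis
    qed
    finally show ?thesis using IH dp by simp
  qed
qed

theorem corollary4p7:
  fixes V :: "'a set" and E :: "'a set set"
    and w :: "'a set \<Rightarrow> complex" and w1 :: "'a \<Rightarrow> real"
  assumes "simple_graph V E"
    and "\<forall>e\<in>E. w e \<noteq> 0"
  shows "(\<forall>P a. path_cover V E P \<longrightarrow> order a (eta_w V E w w1) \<le> card P)
       \<and> (\<forall>p. is_path V E p \<longrightarrow> length p \<le> card {x. poly (eta_w V E w w1) x = 0})"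
proof -
  have finV: "finite V" and E2: "\<forall>e\<in>E. card e = 2" using assms(1) by (auto simp: simple_graph_def)
  interpret WG E w w1 using E2 assms(2) by unfold_locales
  have ep: "epath p \<and> set p \<subseteq> V" if "is_path V E p" for p
    using that by (auto simp: is_path_def epath_def)
  show ?thesis
  proof (intro conjI allI impI)
    fix P a assume "path_cover V E P"
    thus "order a (ETA V) \<le> card P"
      unfolding path_cover_def using ep by (intro mult_cover) auto
  next
    fix p assume "is_path V E p"
    hence p: "epath p" "set p \<subseteq> V" using ep by auto
    define Z where "Z = {x. poly (ETA V) x = 0}"
    have finZ: "finite Z" unfolding Z_def using eta_nz[OF finV] by (rule poly_roots_finite)
    have finV': "finite (V - set p)" using finV by simp
    have "card V = degree (ETA V)" using deg[OF finV] by simp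
    also have "\<dots> \<le> (\<Sum>x\<in>Z. order x (ETA V))"
      unfolding Z_def by (rule sum_order_ge_real[OF eta_nz[OF finV] roots_real[OF finV]])
    also have "\<dots> \<le> (\<Sum>x\<in>Z. Suc (order x (ETA (V - set p))))"
      by (rule sum_mono) (rule mult_path[OF finV p])
    also have "\<dots> = (\<Sum>x\<in>Z. order x (ETA (V - set p))) + card Z"
      by (simp add: sum_Suc)
    also have "(\<Sum>x\<in>Z. order x (ETA (V - set p))) \<le> degree (ETA (V - set p))"
      by (rule sum_order_le[OF finZ eta_nz[OF finV']])
    also have "degree (ETA (V - set p)) = card V - length p"
    proof -
      have "degree (ETA (V - set p)) = card (V - set p)" using deg[OF finV'] by simp
      also have "\<dots> = card V - card (set p)" using p finV by (simp add: card_Diff_subset finite_subset)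
      also have "card (set p) = length p" using p(1) by (simp add: epath_def distinct_card)
      finally show ?thesis .
    qed
    finally have "card V \<le> card V - length p + card Z" by simp
    moreover have "length p \<le> card V"
      using p finV by (metis card_mono distinct_card epath_def)
    ultimately show "length p \<le> card {x. poly (ETA V) x = 0}" unfolding Z_def[symmetric] by linarith
  qed
qed


end
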